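(* In the joint design model with fully flexible users described in the context, let $\mathcal{M}^*=\{m:S(m)=S_{\min}\}$ and pick any $m^*\in\mathcal{M}^*$. Define profiles $\mathbf P^*$ by $$P^*_{n,t}(m)=\begin{cases}1-\tilde q_{n,t},&m=m^*,\\0,&m\ne m^*,\end{cases}$$ and let $$\mathbf x^*=\arg\min_{\mathbf x}\frac1T\sum_{t=0}^{T-1}\mathbb{E}\Bigl[C\Bigl(L^*_t+\sum_{m,n}(x_{n,t+1}(m)-x_{n,t}(m)I^*_{n,t}(m))\Bigr)\Bigr]$$ subject to $0\le x_{n,t}(m)\le S(m)$ for all $m,n,t$. Here $I^*_{n,t}(m)$ are the demand indicators under $\mathbf P^*$ and $L^*_t=\sum_{m,n}S(m)I^*_{n,t}(m)$. Then $(\mathbf P^*,\mathbf x^* )$ is a globally optimal solution of the joint problem. Moreover, if $|\mathcal{M}^*|=1$, then $(\mathbf P^*,\mathbf x^* )$ is the unique optimal solution.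
   Context: There are $N$ users, $M$ data items of sizes $S(m)>0$ with $S_{\min}=\min_mS(m)$, and a period of $T$ slots; slot indices are modulo $T$ and $x_{n,T}=x_{n,0}$. Each user $n$ has an initial demand profile $\tilde{\mathbf P}_{n,t}$ for each slot $t$, with inactivity probability $\tilde q_{n,t}=1-\sum_m\tilde P_{n,t}(m)$. For any choice of profiles $\mathbf P=(\mathbf P_{n,t})$, the demand indicators $I_{n,t}(m)\in\{0,1\}$ satisfy $\Pr(I_{n,t}(m)=1)=P_{n,t}(m)$ and $\sum_mI_{n,t}(m)\le1$, with independence across distinct users in the same slot. The load is $L_t=\sum_{m,n}S(m)I_{n,t}(m)$. The cost function $C:\mathbb{R}_+\to\mathbb{R}_+$ is smooth, strictly convex and increasing. Joint problem: minimize $$\frac1T\sum_{t=0}^{T-1}\mathbb{E}\Bigl[C\Bigl(L_t+\sum_{m=1}^M\sum_{n=1}^N(x_{n,t+1}(m)-x_{n,t}(m)I_{n,t}(m))\Bigr)\Bigr]$$ over $(\mathbf P,\mathbf x)$, where the expectation is under the profiles $\mathbf P$. The constraints are $0\le x_{n,t}(m)\le S(m)$ and $\mathbf P_{n,t}\in\mathcal F_{n,t}$ for all $n,t$. Under full flexibility, $\mathcal F_{n,t}=\{\mathbf P_{n,t}:P_{n,t}(m)\ge0\ \forall m,\ \sum_mP_{n,t}(m)=1-\tilde q_{n,t}\}$. *)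

theory Defs
  imports "HOL-Analysis.Analysis"
begin

text \<open>Users: finite type 'n. Items: finite type 'm. Slots: 0..T-1 (nat), slot T identified with 0.\<close>

definition strictly_convex_on :: "real set \<Rightarrow> (real \<Rightarrow> real) \<Rightarrow> bool" where
  "strictly_convex_on A f \<longleftrightarrow>
     (\<forall>x\<in>A. \<forall>y\<in>A. \<forall>u::real. x \<noteq> y \<and> 0 < u \<and> u < 1 \<longrightarrow>
        f (u * x + (1 - u) * y) < u * f x + (1 - u) * f y)"

definition inact :: "('m::finite \<Rightarrow> real) \<Rightarrow> real" where
  "inact p = 1 - (\<Sum>m\<in>UNIV. p m)"

text \<open>Probability that one user's demand outcome in a slot is o (None = inactive,
  Some m = requests item m), under profile p.\<close>
definition outcome_prob :: "('m::finite \<Rightarrow> real) \<Rightarrow> 'm option \<Rightarrow> real" where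
  "outcome_prob p oc = (case oc of None \<Rightarrow> inact p | Some m \<Rightarrow> p m)"

definition ind :: "'m option \<Rightarrow> 'm \<Rightarrow> real" where
  "ind oc m = (if oc = Some m then 1 else 0)"

text \<open>Expected cost in slot t: expectation over the joint outcome c of all users,
  users independent in the same slot. x n t m is the amount of item m prefetched
  for user n before slot t; slot indices modulo T.\<close>
definition slot_cost ::
  "(real \<Rightarrow> real) \<Rightarrow> ('m::finite \<Rightarrow> real) \<Rightarrow> nat \<Rightarrow>
   ('n::finite \<Rightarrow> nat \<Rightarrow> 'm \<Rightarrow> real) \<Rightarrow> ('n \<Rightarrow> nat \<Rightarrow> 'm \<Rightarrow> real) \<Rightarrow> nat \<Rightarrow> real" where
  "slot_cost C S T P x t =
     (\<Sum>c\<in>(UNIV :: ('n \<Rightarrow> 'm option) set).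
        (\<Prod>n\<in>UNIV. outcome_prob (P n t) (c n)) *
        C ((\<Sum>m\<in>UNIV. \<Sum>n\<in>UNIV. S m * ind (c n) m)
           + (\<Sum>m\<in>UNIV. \<Sum>n\<in>UNIV. x n (Suc t mod T) m - x n t m * ind (c n) m)))"

definition joint_cost ::
  "(real \<Rightarrow> real) \<Rightarrow> ('m::finite \<Rightarrow> real) \<Rightarrow> nat \<Rightarrow>
   ('n::finite \<Rightarrow> nat \<Rightarrow> 'm \<Rightarrow> real) \<Rightarrow> ('n \<Rightarrow> nat \<Rightarrow> 'm \<Rightarrow> real) \<Rightarrow> real" where
  "joint_cost C S T P x = (1 / real T) * (\<Sum>t<T. slot_cost C S T P x t)"

definition x_feasible :: "('m::finite \<Rightarrow> real) \<Rightarrow> nat \<Rightarrow> ('n::finite \<Rightarrow> nat \<Rightarrow> 'm \<Rightarrow> real) \<Rightarrow> bool" where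
  "x_feasible S T x \<longleftrightarrow> (\<forall>n t m. t < T \<longrightarrow> 0 \<le> x n t m \<and> x n t m \<le> S m)"

definition P_feasible :: "('n::finite \<Rightarrow> nat \<Rightarrow> 'm::finite \<Rightarrow> real) \<Rightarrow> nat \<Rightarrow> ('n \<Rightarrow> nat \<Rightarrow> 'm \<Rightarrow> real) \<Rightarrow> bool" where
  "P_feasible Ptil T P \<longleftrightarrow>
     (\<forall>n t. t < T \<longrightarrow> (\<forall>m. 0 \<le> P n t m) \<and> (\<Sum>m\<in>UNIV. P n t m) = 1 - inact (Ptil n t))"

definition globally_optimal where
  "globally_optimal C S T Ptil P x \<longleftrightarrow>
     P_feasible Ptil T P \<and> x_feasible S T x \<and>
     (\<forall>P' x'. P_feasible Ptil T P' \<and> x_feasible S T x' \<longrightarrow>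
        joint_cost C S T P x \<le> joint_cost C S T P' x')"

definition x_argmin where
  "x_argmin C S T P x \<longleftrightarrow>
     x_feasible S T x \<and> (\<forall>x'. x_feasible S T x' \<longrightarrow> joint_cost C S T P x \<le> joint_cost C S T P x')"

end

theory Submission
  imports Defs
begin

lemma push:
  fixes p :: "'n::finite \<Rightarrow> 'a::finite \<Rightarrow> real" and h :: "'a \<Rightarrow> 'b::finite"
    and g :: "('n \<Rightarrow> 'b) \<Rightarrow> real"
  shows "(\<Sum>c\<in>UNIV. (\<Prod>n\<in>UNIV. p n (c n)) * g (\<lambda>n. h (c n))) =
         (\<Sum>d\<in>UNIV. (\<Prod>n\<in>UNIV. (\<Sum>a\<in>{a. h a = d n}. p n a)) * g d)"
proof -
  have "(\<Sum>c\<in>UNIV. (\<Prod>n\<in>UNIV. p n (c n)) * g (\<lambda>n. h (c n))) =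
        (\<Sum>d\<in>UNIV. \<Sum>c\<in>{c. c \<in> UNIV \<and> (\<lambda>n. h (c n)) = d}. (\<Prod>n\<in>UNIV. p n (c n)) * g (\<lambda>n. h (c n)))"
    by (rule sum.group[symmetric]) auto
  also have "\<dots> = (\<Sum>d\<in>UNIV. (\<Prod>n\<in>UNIV. (\<Sum>a\<in>{a. h a = d n}. p n a)) * g d)"
  proof (rule sum.cong[OF refl])
    fix d :: "'n \<Rightarrow> 'b"
    have e: "{c. c \<in> UNIV \<and> (\<lambda>n. h (c n)) = d} = PiE UNIV (\<lambda>n. {a. h a = d n})"
      by (auto simp: PiE_def Pi_def extensional_def fun_eq_iff)
    have "(\<Sum>c\<in>{c. c \<in> UNIV \<and> (\<lambda>n. h (c n)) = d}. (\<Prod>n\<in>UNIV. p n (c n)) * g (\<lambda>n. h (c n)))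
        = (\<Sum>c\<in>PiE UNIV (\<lambda>n. {a. h a = d n}). (\<Prod>n\<in>UNIV. p n (c n)) * g d)"
      unfolding e by (rule sum.cong[OF refl]) (auto simp: PiE_def Pi_def fun_eq_iff)
    also have "\<dots> = (\<Sum>c\<in>PiE UNIV (\<lambda>n. {a. h a = d n}). (\<Prod>n\<in>UNIV. p n (c n))) * g d"
      by (simp add: sum_distrib_right)
    also have "\<dots> = (\<Prod>n\<in>UNIV. (\<Sum>a\<in>{a. h a = d n}. p n a)) * g d"
      by (subst prod_sum_PiE) auto
    finally show "(\<Sum>c\<in>{c. c \<in> UNIV \<and> (\<lambda>n. h (c n)) = d}. (\<Prod>n\<in>UNIV. p n (c n)) * g (\<lambda>n. h (c n)))
        = (\<Prod>n\<in>UNIV. (\<Sum>a\<in>{a. h a = d n}. p n a)) * g d" .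
  qed
  finally show ?thesis .
qed

lemma sum_ind: "(\<Sum>m\<in>UNIV. f m * ind oc m) = (case oc of None \<Rightarrow> 0 | Some k \<Rightarrow> f k)" for oc :: "'m::finite option"
proof (cases oc)
  case None then show ?thesis by (simp add: ind_def)
next
  case (Some a)
  have "(\<lambda>m. f m * ind oc m) = (\<lambda>m. if m = a then f m else 0)" using Some by (auto simp: ind_def fun_eq_iff)
  then have "(\<Sum>m\<in>UNIV. f m * ind oc m) = (\<Sum>m\<in>UNIV. if m = a then f m else 0)" by (rule arg_cong)
  also have "\<dots> = f a" by simp
  finally show ?thesis using Some by simp
qed

lemma sum_opt: "(\<Sum>a\<in>UNIV. f a) = f None + (\<Sum>m\<in>UNIV. f (Some m))" for f :: "'m::finite option \<Rightarrow> real"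
  by (simp add: UNIV_option_conv sum.reindex)

lemma outcome_sum: "(\<Sum>a\<in>UNIV. outcome_prob p a) = 1"
  by (simp add: sum_opt outcome_prob_def inact_def)

lemma arg_eq:
  fixes c :: "'n::finite \<Rightarrow> 'm::finite option"
  shows
  "(\<Sum>m\<in>UNIV. \<Sum>n\<in>UNIV. S m * ind (c n) m)
     + (\<Sum>m\<in>UNIV. \<Sum>n\<in>UNIV. x n t1 m - x n t m * ind (c n) m)
   = (\<Sum>n\<in>UNIV. (case c n of None \<Rightarrow> 0 | Some k \<Rightarrow> S k - x n t k) + (\<Sum>m\<in>UNIV. x n t1 m))"
proof -
  have "(\<Sum>m\<in>UNIV. \<Sum>n\<in>UNIV. S m * ind (c n) m)
     + (\<Sum>m\<in>UNIV. \<Sum>n\<in>UNIV. x n t1 m - x n t m * ind (c n) m)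
     = (\<Sum>n\<in>UNIV. (\<Sum>m\<in>UNIV. S m * ind (c n) m) - (\<Sum>m\<in>UNIV. x n t m * ind (c n) m) + (\<Sum>m\<in>UNIV. x n t1 m))"
    by (subst (1 2) sum.swap) (simp add: sum.distrib sum_subtractf algebra_simps)
  also have "\<dots> = (\<Sum>n\<in>UNIV. (case c n of None \<Rightarrow> 0 | Some k \<Rightarrow> S k - x n t k) + (\<Sum>m\<in>UNIV. x n t1 m))"
    by (rule sum.cong[OF refl]) (simp add: sum_ind split: option.split)
  finally show ?thesis .
qed

definition Fa :: "('m::finite \<Rightarrow> real) \<Rightarrow> nat \<Rightarrow> ('n::finite \<Rightarrow> nat \<Rightarrow> 'm \<Rightarrow> real) \<Rightarrow> nat \<Rightarrow> ('n \<Rightarrow> 'm option) \<Rightarrow> real" where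
  "Fa S T x t c = (\<Sum>n\<in>UNIV. (case c n of None \<Rightarrow> 0 | Some k \<Rightarrow> S k - x n t k) + (\<Sum>m\<in>UNIV. x n (Suc t mod T) m))"

definition xp :: "('m::finite \<Rightarrow> real) \<Rightarrow> 'm \<Rightarrow> ('n \<Rightarrow> nat \<Rightarrow> 'm \<Rightarrow> real) \<Rightarrow> 'n \<Rightarrow> nat \<Rightarrow> 'm \<Rightarrow> real" where
  "xp S ms x = (\<lambda>n t m. if m = ms then min (S ms) (\<Sum>k\<in>UNIV. x n t k) else 0)"

definition proj :: "'m \<Rightarrow> ('n \<Rightarrow> 'm option) \<Rightarrow> 'n \<Rightarrow> 'm option" where
  "proj ms c = (\<lambda>n. map_option (\<lambda>_. ms) (c n))"

lemma xp_sum: "(\<Sum>m\<in>UNIV. xp S ms x n t m) = min (S ms) (\<Sum>k\<in>UNIV. x n t k)"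
  by (simp add: xp_def sum.delta sum.delta')

lemma slot_eq: "slot_cost C S T P x t = (\<Sum>c\<in>UNIV. (\<Prod>n\<in>UNIV. outcome_prob (P n t) (c n)) * C (Fa S T x t c))"
  unfolding slot_cost_def Fa_def by (simp only: arg_eq)

lemma fiber:
  assumes "(\<Sum>m\<in>UNIV. p m) = s"
  shows "(\<Sum>a\<in>{a. map_option (\<lambda>_. ms) a = b}. outcome_prob p a) = outcome_prob (\<lambda>m. if m = ms then s else (0::real)) b"
proof (cases b)
  case None
  then have "{a. map_option (\<lambda>_. ms) a = b} = {None}" by auto
  then show ?thesis using None assms by (simp add: outcome_prob_def inact_def sum.delta sum.delta')
next
  case (Some k)
  show ?thesis
  proof (cases "k = ms")
    case True
    then have eq: "{a. map_option (\<lambda>_. ms) a = b} = range Some" using Some by auto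
    have "(\<Sum>a\<in>{a. map_option (\<lambda>_. ms) a = b}. outcome_prob p a) = (\<Sum>a\<in>range Some. outcome_prob p a)" by (simp only: eq)
    also have "\<dots> = s" using assms by (simp add: outcome_prob_def sum.reindex)
    finally show ?thesis using Some True by (simp add: outcome_prob_def)
  next
    case False
    then have "{a. map_option (\<lambda>_. ms) a = b} = {}" using Some by auto
    then show ?thesis using Some False by (simp add: outcome_prob_def)
  qed
qed

lemma slot_star:
  fixes P Ptil :: "'n::finite \<Rightarrow> nat \<Rightarrow> 'm::finite \<Rightarrow> real"
  assumes mass: "\<And>n. (\<Sum>m\<in>UNIV. P n t m) = 1 - inact (Ptil n t)"
    and Pst: "Pstar = (\<lambda>n t m. if m = ms then 1 - inact (Ptil n t) else 0)"
  shows "slot_cost C S T Pstar y t =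
     (\<Sum>c\<in>UNIV. (\<Prod>n\<in>UNIV. outcome_prob (P n t) (c n)) * C (Fa S T y t (proj ms c)))"
proof -
  have "(\<Sum>c\<in>UNIV. (\<Prod>n\<in>UNIV. outcome_prob (P n t) (c n)) * C (Fa S T y t (proj ms c)))
     = (\<Sum>d\<in>UNIV. (\<Prod>n\<in>UNIV. (\<Sum>a\<in>{a. map_option (\<lambda>_. ms) a = d n}. outcome_prob (P n t) a)) * C (Fa S T y t d))"
    unfolding proj_def by (rule push)
  also have "\<dots> = (\<Sum>d\<in>UNIV. (\<Prod>n\<in>UNIV. outcome_prob (Pstar n t) (d n)) * C (Fa S T y t d))"
    by (simp add: fiber[OF mass] Pst)
  finally show ?thesis by (simp add: slot_eq)
qed

lemma user_le:
  fixes x :: "'n \<Rightarrow> nat \<Rightarrow> 'm::finite \<Rightarrow> real"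
  assumes x0: "\<And>m. 0 \<le> x n t m" and x0': "\<And>m. x n t m \<le> S m" and x1: "\<And>m. 0 \<le> x n t1 m"
    and Smin: "\<And>m. S ms \<le> S m"
  shows "0 \<le> (case map_option (\<lambda>_. ms) oc of None \<Rightarrow> 0 | Some k \<Rightarrow> S k - xp S ms x n t k) + (\<Sum>m\<in>UNIV. xp S ms x n t1 m)"
    and "(case map_option (\<lambda>_. ms) oc of None \<Rightarrow> 0 | Some k \<Rightarrow> S k - xp S ms x n t k) + (\<Sum>m\<in>UNIV. xp S ms x n t1 m)
         \<le> (case oc of None \<Rightarrow> 0 | Some k \<Rightarrow> S k - x n t k) + (\<Sum>m\<in>UNIV. x n t1 m)"
    and "S ms < (\<Sum>m\<in>UNIV. x n t1 m) \<Longrightarrow>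
         (case map_option (\<lambda>_. ms) oc of None \<Rightarrow> 0 | Some k \<Rightarrow> S k - xp S ms x n t k) + (\<Sum>m\<in>UNIV. xp S ms x n t1 m)
         < (case oc of None \<Rightarrow> 0 | Some k \<Rightarrow> S k - x n t k) + (\<Sum>m\<in>UNIV. x n t1 m)"
    and "oc = Some k \<Longrightarrow> S ms < S k \<Longrightarrow> (\<Sum>j\<in>UNIV. x n t j) \<le> S ms \<Longrightarrow>
         (case map_option (\<lambda>_. ms) oc of None \<Rightarrow> 0 | Some k \<Rightarrow> S k - xp S ms x n t k) + (\<Sum>m\<in>UNIV. xp S ms x n t1 m)
         < (case oc of None \<Rightarrow> 0 | Some k \<Rightarrow> S k - x n t k) + (\<Sum>m\<in>UNIV. x n t1 m)"
proof -
  have Y0: "0 \<le> (\<Sum>m\<in>UNIV. x n t1 m)" using x1 by (simp add: sum_nonneg)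
  have X0: "0 \<le> (\<Sum>m\<in>UNIV. x n t m)" using x0 by (simp add: sum_nonneg)
  have Xk: "x n t k \<le> (\<Sum>m\<in>UNIV. x n t m)" for k
    by (rule member_le_sum) (auto simp: x0)
  have xpv: "xp S ms x n t ms = min (S ms) (\<Sum>m\<in>UNIV. x n t m)" by (simp add: xp_def)
  have Sms: "0 \<le> S ms" using x0[of ms] x0'[of ms] by linarith
  note xs = xp_sum[of S ms x n t1]
  show "0 \<le> (case map_option (\<lambda>_. ms) oc of None \<Rightarrow> 0 | Some k \<Rightarrow> S k - xp S ms x n t k) + (\<Sum>m\<in>UNIV. xp S ms x n t1 m)"
    using Y0 X0 xs xpv Sms by (cases oc) (auto simp: min_def)
  show "(case map_option (\<lambda>_. ms) oc of None \<Rightarrow> 0 | Some k \<Rightarrow> S k - xp S ms x n t k) + (\<Sum>m\<in>UNIV. xp S ms x n t1 m)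
         \<le> (case oc of None \<Rightarrow> 0 | Some k \<Rightarrow> S k - x n t k) + (\<Sum>m\<in>UNIV. x n t1 m)"
  proof (cases oc)
    case (Some j)
    show ?thesis using Some Y0 X0 xs xpv Xk[of j] Smin[of j] x0'[of j] by (auto simp: min_def)
  qed (use Y0 xs in \<open>auto simp: min_def\<close>)
  show "S ms < (\<Sum>m\<in>UNIV. x n t1 m) \<Longrightarrow>
         (case map_option (\<lambda>_. ms) oc of None \<Rightarrow> 0 | Some k \<Rightarrow> S k - xp S ms x n t k) + (\<Sum>m\<in>UNIV. xp S ms x n t1 m)
         < (case oc of None \<Rightarrow> 0 | Some k \<Rightarrow> S k - x n t k) + (\<Sum>m\<in>UNIV. x n t1 m)"
  proof (cases oc)
    case (Some j)
    assume "S ms < (\<Sum>m\<in>UNIV. x n t1 m)"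
    then show ?thesis using Some Y0 X0 xs xpv Xk[of j] Smin[of j] x0'[of j] by (auto simp: min_def)
  qed (use Y0 xs in \<open>auto simp: min_def\<close>)
  show "oc = Some k \<Longrightarrow> S ms < S k \<Longrightarrow> (\<Sum>j\<in>UNIV. x n t j) \<le> S ms \<Longrightarrow>
         (case map_option (\<lambda>_. ms) oc of None \<Rightarrow> 0 | Some k \<Rightarrow> S k - xp S ms x n t k) + (\<Sum>m\<in>UNIV. xp S ms x n t1 m)
         < (case oc of None \<Rightarrow> 0 | Some k \<Rightarrow> S k - x n t k) + (\<Sum>m\<in>UNIV. x n t1 m)"
    using Y0 X0 xs xpv Xk[of k] by (auto simp: min_def)
qed

lemma Fa_bounds:
  fixes x :: "'n::finite \<Rightarrow> nat \<Rightarrow> 'm::finite \<Rightarrow> real"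
  assumes xf: "x_feasible S T x" and tT: "t < T" and Smin: "\<And>m. S ms \<le> S m"
  shows "0 \<le> Fa S T (xp S ms x) t (proj ms c)"
    and "Fa S T (xp S ms x) t (proj ms c) \<le> Fa S T x t c"
    and "S ms < (\<Sum>m\<in>UNIV. x n (Suc t mod T) m) \<Longrightarrow> Fa S T (xp S ms x) t (proj ms c) < Fa S T x t c"
    and "c n = Some k \<Longrightarrow> S ms < S k \<Longrightarrow> (\<Sum>j\<in>UNIV. x n t j) \<le> S ms \<Longrightarrow>
         Fa S T (xp S ms x) t (proj ms c) < Fa S T x t c"
proof -
  have t1: "Suc t mod T < T" using tT by simp
  have a: "\<And>n m. 0 \<le> x n t m" "\<And>n m. x n t m \<le> S m" "\<And>n m. 0 \<le> x n (Suc t mod T) m"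
    using xf tT t1 by (auto simp: x_feasible_def)
  have Fxp: "Fa S T (xp S ms x) t (proj ms c) = (\<Sum>n\<in>UNIV. (case map_option (\<lambda>_. ms) (c n) of None \<Rightarrow> 0 | Some k \<Rightarrow> S k - xp S ms x n t k) + (\<Sum>m\<in>UNIV. xp S ms x n (Suc t mod T) m))"
    by (simp only: Fa_def proj_def)
  have Fx: "Fa S T x t c = (\<Sum>n\<in>UNIV. (case c n of None \<Rightarrow> 0 | Some k \<Rightarrow> S k - x n t k) + (\<Sum>m\<in>UNIV. x n (Suc t mod T) m))"
    by (simp add: Fa_def)
  note U = user_le[of x _ t S "Suc t mod T" ms, OF a Smin]
  show "0 \<le> Fa S T (xp S ms x) t (proj ms c)"
    unfolding Fxp by (rule sum_nonneg) (rule U(1))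
  show "Fa S T (xp S ms x) t (proj ms c) \<le> Fa S T x t c"
    unfolding Fxp Fx by (rule sum_mono) (rule U(2))
  show "S ms < (\<Sum>m\<in>UNIV. x n (Suc t mod T) m) \<Longrightarrow> Fa S T (xp S ms x) t (proj ms c) < Fa S T x t c"
    unfolding Fxp Fx by (rule sum_strict_mono_ex1) (simp, use U(2) in blast, use U(3) in blast)
  show "c n = Some k \<Longrightarrow> S ms < S k \<Longrightarrow> (\<Sum>j\<in>UNIV. x n t j) \<le> S ms \<Longrightarrow>
         Fa S T (xp S ms x) t (proj ms c) < Fa S T x t c"
    unfolding Fxp Fx by (rule sum_strict_mono_ex1) (simp, use U(2) in blast, use U(4) in blast)
qed

theorem theorem4:
  fixes C :: "real \<Rightarrow> real"
    and S :: "'m::finite \<Rightarrow> real"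
    and T :: nat
    and Ptil :: "'n::finite \<Rightarrow> nat \<Rightarrow> 'm \<Rightarrow> real"
    and mstar :: 'm
    and Pstar xstar :: "'n \<Rightarrow> nat \<Rightarrow> 'm \<Rightarrow> real"
  assumes T_pos: "0 < T"
    and S_pos: "\<And>m. 0 < S m"
    and Ptil_nonneg: "\<And>n t m. t < T \<Longrightarrow> 0 \<le> Ptil n t m"
    and Ptil_mass: "\<And>n t. t < T \<Longrightarrow> (\<Sum>m\<in>UNIV. Ptil n t m) \<le> 1"
    and C_nonneg: "\<And>y. 0 \<le> y \<Longrightarrow> 0 \<le> C y"
    and C_incr: "strict_mono_on {0..} C"
    and C_strict_convex: "strictly_convex_on {0..} C"
    and C_cont: "continuous_on {0..} C"
    and C_smooth: "\<And>k y. 0 < y \<Longrightarrow> ((deriv ^^ k) C) differentiable (at y)"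
    and mstar_min: "mstar \<in> {m. S m = Min (range S)}"
    and Pstar_def: "Pstar = (\<lambda>n t m. if m = mstar then 1 - inact (Ptil n t) else 0)"
    and xstar_argmin: "x_argmin C S T Pstar xstar"
  shows "globally_optimal C S T Ptil Pstar xstar \<and>
         (card {m. S m = Min (range S)} = 1 \<longrightarrow>
            (\<forall>P x. globally_optimal C S T Ptil P x \<longrightarrow>
               (\<forall>n t m. t < T \<longrightarrow> P n t m = Pstar n t m) \<and> x_argmin C S T Pstar x))"
proof -
  have Sst: "S mstar = Min (range S)" using mstar_min by simp
  have Smin: "\<And>m. S mstar \<le> S m" unfolding Sst by (rule Min_le) auto
  have mass0: "\<And>n t. t < T \<Longrightarrow> 0 \<le> 1 - inact (Ptil n t)"
    by (simp add: inact_def sum_nonneg Ptil_nonneg)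
  have inact0: "\<And>n t. t < T \<Longrightarrow> 0 \<le> inact (Ptil n t)"
    using Ptil_mass by (simp add: inact_def)
  have Pstar_feas: "P_feasible Ptil T Pstar"
    unfolding P_feasible_def Pstar_def using mass0 by (simp add: sum.delta sum.delta')
  have xp_feas: "x_feasible S T (xp S mstar x)" if xf: "x_feasible S T x" for x
  proof -
    have "0 \<le> (\<Sum>k\<in>UNIV. x n t k)" if "t < T" for n t
      using xf that by (simp add: x_feasible_def sum_nonneg)
    then show ?thesis using S_pos unfolding x_feasible_def xp_def
      by (auto simp: less_imp_le)
  qed
  have op_nonneg: "0 \<le> outcome_prob (P n t) a" if Pf: "P_feasible Ptil T P" and tT: "t < T" for P n t a
  proof (cases a)
    case None
    have "inact (P n t) = inact (Ptil n t)" using Pf tT by (simp add: P_feasible_def inact_def)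
    then show ?thesis using None inact0[OF tT] by (simp add: outcome_prob_def)
  next
    case (Some m) then show ?thesis using Pf tT by (simp add: outcome_prob_def P_feasible_def)
  qed
  have w_nonneg: "0 \<le> (\<Prod>n\<in>UNIV. outcome_prob (P n t) (c n))" if "P_feasible Ptil T P" "t < T" for P t c
    by (rule prod_nonneg) (use op_nonneg[OF that] in auto)
  have diff: "slot_cost C S T P x t - slot_cost C S T Pstar (xp S mstar x) t =
     (\<Sum>c\<in>UNIV. (\<Prod>n\<in>UNIV. outcome_prob (P n t) (c n)) *
        (C (Fa S T x t c) - C (Fa S T (xp S mstar x) t (proj mstar c))))"
    if Pf: "P_feasible Ptil T P" and tT: "t < T" for P x t
  proof -
    have mass: "\<And>n. (\<Sum>m\<in>UNIV. P n t m) = 1 - inact (Ptil n t)" using Pf tT by (simp add: P_feasible_def)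
    show ?thesis
      unfolding slot_eq[of C S T P x t] slot_star[of P t Ptil Pstar mstar, OF mass Pstar_def]
      by (simp add: sum_subtractf right_diff_distrib)
  qed
  have Cmono: "C b \<le> C a" if "0 \<le> b" "b \<le> a" for a b
  proof (cases "b = a")
    case False
    then have "b < a" using that by simp
    then show ?thesis using strict_mono_onD[OF C_incr] that by force
  qed simp
  have slot_le: "slot_cost C S T Pstar (xp S mstar x) t \<le> slot_cost C S T P x t"
    if Pf: "P_feasible Ptil T P" and xf: "x_feasible S T x" and tT: "t < T" for P x t
  proof -
    have "0 \<le> (\<Sum>c\<in>UNIV. (\<Prod>n\<in>UNIV. outcome_prob (P n t) (c n)) *
        (C (Fa S T x t c) - C (Fa S T (xp S mstar x) t (proj mstar c))))"
    proof (rule sum_nonneg, rule mult_nonneg_nonneg)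
      fix c
      show "0 \<le> (\<Prod>n\<in>UNIV. outcome_prob (P n t) (c n))" by (rule w_nonneg[OF Pf tT])
      show "0 \<le> C (Fa S T x t c) - C (Fa S T (xp S mstar x) t (proj mstar c))"
        using Cmono[OF Fa_bounds(1)[OF xf tT Smin] Fa_bounds(2)[OF xf tT Smin]] by simp
    qed
    then show ?thesis using diff[OF Pf tT, of x] by simp
  qed
  have joint_le: "joint_cost C S T Pstar (xp S mstar x) \<le> joint_cost C S T P x"
    if Pf: "P_feasible Ptil T P" and xf: "x_feasible S T x" for P x
    unfolding joint_cost_def
    by (rule mult_left_mono) (auto intro!: sum_mono slot_le[OF Pf xf])
  have part1: "globally_optimal C S T Ptil Pstar xstar"
    unfolding globally_optimal_def
  proof (intro conjI allI impI)
    show "P_feasible Ptil T Pstar" by (rule Pstar_feas)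
    show "x_feasible S T xstar" using xstar_argmin by (simp add: x_argmin_def)
    fix P' x' :: "'n \<Rightarrow> nat \<Rightarrow> 'm \<Rightarrow> real" assume "P_feasible Ptil T P' \<and> x_feasible S T x'"
    then have Pf: "P_feasible Ptil T P'" and xf: "x_feasible S T x'" by auto
    have "joint_cost C S T Pstar xstar \<le> joint_cost C S T Pstar (xp S mstar x')"
      using xstar_argmin xp_feas[OF xf] by (simp add: x_argmin_def)
    also have "\<dots> \<le> joint_cost C S T P' x'" by (rule joint_le[OF Pf xf])
    finally show "joint_cost C S T Pstar xstar \<le> joint_cost C S T P' x'" .
  qed
  have part2: "(\<forall>n t m. t < T \<longrightarrow> P n t m = Pstar n t m) \<and> x_argmin C S T Pstar x"
    if card1: "card {m. S m = Min (range S)} = 1" and go: "globally_optimal C S T Ptil P x" for P x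
  proof -
    have Pf: "P_feasible Ptil T P" and xf: "x_feasible S T x"
      and opt: "\<And>P' x'. P_feasible Ptil T P' \<Longrightarrow> x_feasible S T x' \<Longrightarrow> joint_cost C S T P x \<le> joint_cost C S T P' x'"
      using go by (auto simp: globally_optimal_def)
    have uniq: "m = mstar" if "S m = S mstar" for m
    proof -
      obtain a where A: "{m. S m = Min (range S)} = {a}" using card1 by (rule card_1_singletonE)
      have "mstar \<in> {a}" "m \<in> {a}" using mstar_min that Sst unfolding A[symmetric] by auto
      then show ?thesis by simp
    qed
    have PP: "\<forall>n t m. t < T \<longrightarrow> P n t m = Pstar n t m"
    proof (rule ccontr)
      assume "\<not> (\<forall>n t m. t < T \<longrightarrow> P n t m = Pstar n t m)"
      then obtain n t m where tT: "t < T" and ne: "P n t m \<noteq> Pstar n t m" by blast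
      have P0: "\<And>j. 0 \<le> P n t j" and mass: "(\<Sum>j\<in>UNIV. P n t j) = 1 - inact (Ptil n t)"
        using Pf tT by (auto simp: P_feasible_def)
      have "\<exists>k. k \<noteq> mstar \<and> 0 < P n t k"
      proof (rule ccontr)
        assume "\<not> (\<exists>k. k \<noteq> mstar \<and> 0 < P n t k)"
        then have z: "\<And>k. k \<noteq> mstar \<Longrightarrow> P n t k = 0" using P0 by (meson antisym not_le)
        have "(\<Sum>j\<in>UNIV. P n t j) = (\<Sum>j\<in>UNIV. if j = mstar then P n t j else 0)"
          by (rule sum.cong) (auto simp: z)
        then have "P n t mstar = 1 - inact (Ptil n t)" using mass by simp
        then have "P n t m = Pstar n t m" using z[of m] by (cases "m = mstar") (auto simp: Pstar_def)
        then show False using ne by simp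
      qed
      then obtain k where kne: "k \<noteq> mstar" and Pk: "0 < P n t k" by blast
      have Sk: "S mstar < S k" using Smin[of k] uniq[of k] kne by force
      have pos_ex: "\<exists>a. 0 < outcome_prob (P j s) a" if "s < T" for j s
      proof (rule ccontr)
        assume "\<not> ?thesis"
        then have "(\<Sum>a\<in>UNIV. outcome_prob (P j s) a) \<le> 0"
          by (intro sum_nonpos) (simp add: not_less)
        then show False by (simp add: outcome_sum)
      qed
      define pick where "pick s = (\<lambda>j. SOME a. 0 < outcome_prob (P j s) a)" for s
      have pick_pos: "0 < outcome_prob (P j s) (pick s j)" if "s < T" for j s
        unfolding pick_def using someI_ex[OF pos_ex[OF that]] .
      have strict_slot: "slot_cost C S T Pstar (xp S mstar x) s < slot_cost C S T P x s"
        if sT: "s < T" and wpos: "0 < (\<Prod>j\<in>UNIV. outcome_prob (P j s) (c j))"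
          and Flt: "Fa S T (xp S mstar x) s (proj mstar c) < Fa S T x s c" for s c
      proof -
        have "0 < (\<Sum>c\<in>UNIV. (\<Prod>n\<in>UNIV. outcome_prob (P n s) (c n)) *
          (C (Fa S T x s c) - C (Fa S T (xp S mstar x) s (proj mstar c))))"
        proof (rule sum_pos2[of UNIV c])
          show "0 < (\<Prod>n\<in>UNIV. outcome_prob (P n s) (c n)) *
            (C (Fa S T x s c) - C (Fa S T (xp S mstar x) s (proj mstar c)))"
            using wpos strict_mono_onD[OF C_incr _ _ Flt] Fa_bounds(1)[OF xf sT Smin, of c] Flt
            by simp
          fix c'
          show "0 \<le> (\<Prod>n\<in>UNIV. outcome_prob (P n s) (c' n)) *
            (C (Fa S T x s c') - C (Fa S T (xp S mstar x) s (proj mstar c')))"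
            using w_nonneg[OF Pf sT] Cmono[OF Fa_bounds(1)[OF xf sT Smin] Fa_bounds(2)[OF xf sT Smin]]
            by (simp add: mult_nonneg_nonneg)
        qed auto
        then show ?thesis using diff[OF Pf sT, of x] by simp
      qed
      have "\<exists>s<T. slot_cost C S T Pstar (xp S mstar x) s < slot_cost C S T P x s"
      proof (cases "S mstar < (\<Sum>j\<in>UNIV. x n t j)")
        case True
        obtain s where sT: "s < T" and st: "Suc s mod T = t"
        proof (cases t)
          case 0
          show ?thesis using that[of "T - 1"] T_pos 0 by simp
        next
          case (Suc t')
          show ?thesis using that[of t'] tT Suc by simp
        qed
        have "0 < (\<Prod>j\<in>UNIV. outcome_prob (P j s) (pick s j))"
          by (rule prod_pos) (use pick_pos[OF sT] in auto)
        moreover have "Fa S T (xp S mstar x) s (proj mstar (pick s)) < Fa S T x s (pick s)"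
          by (rule Fa_bounds(3)[OF xf sT Smin, where n=n]) (use True st in simp)
        ultimately show ?thesis using strict_slot[OF sT] sT by blast
      next
        case False
        define c where "c = (pick t)(n := Some k)"
        have "0 < (\<Prod>j\<in>UNIV. outcome_prob (P j t) (c j))"
          by (rule prod_pos) (use pick_pos[OF tT] Pk in \<open>auto simp: c_def outcome_prob_def\<close>)
        moreover have "Fa S T (xp S mstar x) t (proj mstar c) < Fa S T x t c"
          by (rule Fa_bounds(4)[OF xf tT Smin, where n=n and k=k]) (use False Sk in \<open>auto simp: c_def\<close>)
        ultimately show ?thesis using strict_slot[OF tT] tT by blast
      qed
      then have "joint_cost C S T Pstar (xp S mstar x) < joint_cost C S T P x"
        unfolding joint_cost_def using T_pos
        by (intro mult_strict_left_mono sum_strict_mono_ex1) (auto intro: slot_le[OF Pf xf])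
      moreover have "joint_cost C S T P x \<le> joint_cost C S T Pstar (xp S mstar x)"
        by (rule opt[OF Pstar_feas xp_feas[OF xf]])
      ultimately show False by simp
    qed
    have "joint_cost C S T P x = joint_cost C S T Pstar x"
    proof -
      have "slot_cost C S T P x t = slot_cost C S T Pstar x t" if "t < T" for t
      proof -
        have "P n t = Pstar n t" for n using PP that by auto
        then show ?thesis by (simp add: slot_cost_def)
      qed
      then show ?thesis unfolding joint_cost_def by simp
    qed
    then have "x_argmin C S T Pstar x"
      using xf opt[OF Pstar_feas] by (simp add: x_argmin_def)
    with PP show ?thesis by simp
  qed
  show ?thesis using part1 part2 by blast
qed

end
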